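(* Let $(\mathcal S,\gamma)$ be an IFS quasiarc with similarity dimension $s$, and let $\phi:[0,1]\to\gamma$ be its Hutchinson parameterization. Then for all $u,v\in[0,1]$ with $u\le v$, $$\mathcal H^s(\phi([u,v]))=\mathcal H^s(\gamma)\,|u-v|,$$ where $\mathcal H^s$ is $s$-dimensional Hausdorff measure.
   Context: $\mathcal S=\{S_1,\dots,S_N\}$, $N\ge2$, contracting similarities of $\mathbb{R}^n$ with ratios $r_i\in(0,1)$, invariant set $\gamma$ (unique nonempty compact set with $\gamma=\bigcup_iS_i(\gamma)$). IFS path: there are $a,b$ with $S_1(a)=a$, $S_N(b)=b$, $S_i(b)=S_{i+1}(a)$ for $i=1,\dots,N-1$. IFS arc: moreover $S_i(\gamma)\cap S_{i+1}(\gamma)=\{S_{i+1}(a)\}$ and $S_i(\gamma)\cap S_j(\gamma)=\emptyset$ for $i,j\in\{1,\dots,N\}$, $|i-j|>1$. IFS quasiarc: moreover $\gamma$ is quasisymmetrically equivalent to $[0,1]$. Similarity dimension: $s>0$ with $\sum_ir_i^s=1$. Hutchinson parameterization: $t_0=0$, $t_i=t_{i-1}+r_i^s$, $s_i(t)=t\,t_i+(1-t)t_{i-1}$; $S_\sigma=S_{\sigma_1}\circ\cdots\circ S_{\sigma_k}$, $s_\sigma$ likewise; $\phi_0(t)=a+t(b-a)$, $\phi_k(t)=S_\sigma\circ\phi_0\circ s_\sigma^{-1}(t)$ on $s_\sigma([0,1])$, $\sigma\in\{1,\dots,N\}^k$; $\phi$ is the uniform limit of the $\phi_k$. *)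

theory Defs
  imports "HOL-Analysis.Analysis"
begin

section \<open>Hausdorff measure (unnormalised; normalisation is irrelevant for the statement)\<close>

definition hausdorff_pre :: "real \<Rightarrow> real \<Rightarrow> 'a::metric_space set \<Rightarrow> ennreal" where
  "hausdorff_pre s \<delta> A =
     (INF U \<in> {U :: nat \<Rightarrow> 'a set. A \<subseteq> (\<Union>i. U i) \<and> (\<forall>i. bounded (U i) \<and> diameter (U i) \<le> \<delta>)}.
        (\<Sum>i. ennreal (diameter (U i) powr s)))"

definition hausdorff_measure :: "real \<Rightarrow> 'a::metric_space set \<Rightarrow> ennreal" where
  "hausdorff_measure s A = (SUP \<delta> \<in> {0<..}. hausdorff_pre s \<delta> A)"

definition similarity :: "real \<Rightarrow> ('a::metric_space \<Rightarrow> 'a) \<Rightarrow> bool" where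
  "similarity r f \<longleftrightarrow> (\<forall>x y. dist (f x) (f y) = r * dist x y)"

definition IFS :: "nat \<Rightarrow> (nat \<Rightarrow> 'a::metric_space \<Rightarrow> 'a) \<Rightarrow> (nat \<Rightarrow> real) \<Rightarrow> 'a set \<Rightarrow> bool" where
  "IFS N S r \<gamma> \<longleftrightarrow> N \<ge> 2 \<and> (\<forall>i\<in>{1..N}. 0 < r i \<and> r i < 1 \<and> similarity (r i) (S i))
     \<and> compact \<gamma> \<and> \<gamma> \<noteq> {} \<and> \<gamma> = (\<Union>i\<in>{1..N}. S i ` \<gamma>)"

definition IFS_path :: "nat \<Rightarrow> (nat \<Rightarrow> 'a::metric_space \<Rightarrow> 'a) \<Rightarrow> (nat \<Rightarrow> real) \<Rightarrow> 'a set \<Rightarrow> 'a \<Rightarrow> 'a \<Rightarrow> bool" where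
  "IFS_path N S r \<gamma> a b \<longleftrightarrow> IFS N S r \<gamma> \<and> S 1 a = a \<and> S N b = b
     \<and> (\<forall>i\<in>{1..N-1}. S i b = S (i+1) a)"

definition IFS_arc :: "nat \<Rightarrow> (nat \<Rightarrow> 'a::metric_space \<Rightarrow> 'a) \<Rightarrow> (nat \<Rightarrow> real) \<Rightarrow> 'a set \<Rightarrow> 'a \<Rightarrow> 'a \<Rightarrow> bool" where
  "IFS_arc N S r \<gamma> a b \<longleftrightarrow> IFS_path N S r \<gamma> a b
     \<and> (\<forall>i\<in>{1..N-1}. S i ` \<gamma> \<inter> S (i+1) ` \<gamma> = {S (i+1) a})
     \<and> (\<forall>i\<in>{1..N}. \<forall>j\<in>{1..N}. i + 1 < j \<longrightarrow> S i ` \<gamma> \<inter> S j ` \<gamma> = {})"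

definition quasisymmetric_on :: "'a::metric_space set \<Rightarrow> ('a \<Rightarrow> 'b::metric_space) \<Rightarrow> bool" where
  "quasisymmetric_on A f \<longleftrightarrow> inj_on f A \<and>
     (\<exists>\<eta> :: real \<Rightarrow> real. strict_mono_on {0..} \<eta> \<and> continuous_on {0..} \<eta> \<and> \<eta> 0 = 0
        \<and> \<eta> ` {0..} = {0..}
        \<and> (\<forall>x\<in>A. \<forall>y\<in>A. \<forall>z\<in>A. x \<noteq> z \<longrightarrow>
              dist (f x) (f y) \<le> \<eta> (dist x y / dist x z) * dist (f x) (f z)))"

definition qs_equivalent_to_unit_interval :: "'a::metric_space set \<Rightarrow> bool" where
  "qs_equivalent_to_unit_interval \<gamma> \<longleftrightarrow>
     (\<exists>f :: real \<Rightarrow> 'a. f ` {0..1} = \<gamma> \<and> quasisymmetric_on {0..1} f)"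

definition IFS_quasiarc :: "nat \<Rightarrow> (nat \<Rightarrow> 'a::metric_space \<Rightarrow> 'a) \<Rightarrow> (nat \<Rightarrow> real) \<Rightarrow> 'a set \<Rightarrow> 'a \<Rightarrow> 'a \<Rightarrow> bool" where
  "IFS_quasiarc N S r \<gamma> a b \<longleftrightarrow> IFS_arc N S r \<gamma> a b \<and> qs_equivalent_to_unit_interval \<gamma>"

definition similarity_dimension :: "nat \<Rightarrow> (nat \<Rightarrow> real) \<Rightarrow> real \<Rightarrow> bool" where
  "similarity_dimension N r s \<longleftrightarrow> s > 0 \<and> (\<Sum>i=1..N. r i powr s) = 1"

definition hut_t :: "(nat \<Rightarrow> real) \<Rightarrow> real \<Rightarrow> nat \<Rightarrow> real" where
  "hut_t r s i = (\<Sum>j=1..i. r j powr s)"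

definition hut_s :: "(nat \<Rightarrow> real) \<Rightarrow> real \<Rightarrow> nat \<Rightarrow> real \<Rightarrow> real" where
  "hut_s r s i t = t * hut_t r s i + (1 - t) * hut_t r s (i - 1)"

definition word_comp :: "(nat \<Rightarrow> 'b \<Rightarrow> 'b) \<Rightarrow> nat list \<Rightarrow> 'b \<Rightarrow> 'b" where
  "word_comp F \<sigma> = foldr (\<lambda>i g. F i \<circ> g) \<sigma> id"

text \<open>phi_k(t) = S_sigma(phi_0(x)) where t = s_sigma(x), x in [0,1], |sigma| = k.\<close>
definition hut_approx :: "nat \<Rightarrow> (nat \<Rightarrow> 'a::real_vector \<Rightarrow> 'a) \<Rightarrow> (nat \<Rightarrow> real) \<Rightarrow> real
    \<Rightarrow> 'a \<Rightarrow> 'a \<Rightarrow> nat \<Rightarrow> real \<Rightarrow> 'a" where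
  "hut_approx N S r s a b k t = (SOME y. \<exists>\<sigma> x. set \<sigma> \<subseteq> {1..N} \<and> length \<sigma> = k \<and> x \<in> {0..1}
      \<and> t = word_comp (hut_s r s) \<sigma> x \<and> y = word_comp S \<sigma> (a + x *\<^sub>R (b - a)))"

definition hutchinson_param :: "nat \<Rightarrow> (nat \<Rightarrow> 'a::real_normed_vector \<Rightarrow> 'a) \<Rightarrow> (nat \<Rightarrow> real) \<Rightarrow> real
    \<Rightarrow> 'a \<Rightarrow> 'a \<Rightarrow> (real \<Rightarrow> 'a) \<Rightarrow> bool" where
  "hutchinson_param N S r s a b \<phi> \<longleftrightarrow>
     uniform_limit {0..1} (hut_approx N S r s a b) \<phi> sequentially"

end

theory Submission
  imports Defs
begin


lemma INF_mult_aux: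
  fixes K X :: ennreal
  assumes "K \<noteq> 0" "K \<noteq> top" "\<And>U. U \<in> C \<Longrightarrow> X \<le> K * g U"
  shows "X \<le> K * (INF U\<in>C. g U)"
proof -
  have "X / K \<le> (INF U\<in>C. g U)"
  proof (rule INF_greatest)
    fix U assume "U \<in> C"
    have "X / K \<le> (K * g U) / K" using assms(3)[OF \<open>U\<in>C\<close>] by (simp add: divide_right_mono_ennreal)
    also have "\<dots> = g U" using assms(1,2) by (metis mult.commute mult_divide_eq_ennreal)
    finally show "X / K \<le> g U" .
  qed
  then have "K * (X / K) \<le> K * (INF U\<in>C. g U)" by (simp add: mult_left_mono)
  moreover have "K * (X / K) = X" using assms(1,2)
    by (metis ennreal_times_divide mult.commute mult_divide_eq_ennreal)
  ultimately show ?thesis by simp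
qed

lemma hpre_le_H: "0 < \<delta> \<Longrightarrow> hausdorff_pre s \<delta> A \<le> hausdorff_measure s A"
  unfolding hausdorff_measure_def by (rule SUP_upper) auto

lemma add_Inf_ennreal:
  fixes c :: ennreal
  assumes "S \<noteq> {}"
  shows "c + Inf S = (INF x\<in>S. c + x)"
proof (rule continuous_at_Inf_mono)
  show "mono ((+) c)" by (simp add: add_left_mono monoI)
  show "continuous (at_right (Inf S)) ((+) c)"
    by (intro continuous_intros)
qed (use assms in auto)

lemma INF_add_le:
  fixes g h :: "_ \<Rightarrow> ennreal"
  assumes "\<And>U V. U \<in> C \<Longrightarrow> V \<in> D \<Longrightarrow> X \<le> g U + h V"
  shows "X \<le> (INF U\<in>C. g U) + (INF V\<in>D. h V)"
proof (cases "C = {} \<or> D = {}")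
  case True then show ?thesis by auto
next
  case False
  have "X \<le> g U + (INF V\<in>D. h V)" if "U \<in> C" for U
  proof -
    have "X \<le> (INF V\<in>D. g U + h V)" using assms that by (auto intro: INF_greatest)
    also have "\<dots> = g U + (INF V\<in>D. h V)"
      using add_Inf_ennreal[of "h ` D" "g U"] False by (simp add: image_comp)
    finally show ?thesis .
  qed
  then have "X \<le> (INF U\<in>C. g U + (INF V\<in>D. h V))" by (auto intro: INF_greatest)
  also have "\<dots> = (INF U\<in>C. g U) + (INF V\<in>D. h V)"
    using add_Inf_ennreal[of "g ` C" "(INF V\<in>D. h V)"] False by (simp add: image_comp add.commute)
  finally show ?thesis .
qed

lemma hpre_mono: "A \<subseteq> B \<Longrightarrow> hausdorff_pre s \<delta> A \<le> hausdorff_pre s \<delta> B"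
  unfolding hausdorff_pre_def by (rule INF_superset_mono) auto

lemma haus_mono: "A \<subseteq> B \<Longrightarrow> hausdorff_measure s A \<le> hausdorff_measure s B"
  unfolding hausdorff_measure_def by (rule SUP_mono) (use hpre_mono in blast)

lemma sum_interleave:
  fixes U V :: "nat \<Rightarrow> ennreal"
  shows "(\<Sum>i. (if even i then U (i div 2) else V (i div 2))) = (\<Sum>i. U i) + (\<Sum>i. V i)"
proof -
  let ?W = "\<lambda>i. (if even i then U (i div 2) else V (i div 2))"
  have "?W sums (\<Sum>i. ?W i)" by (rule summable_sums) (rule summableI)
  from sums_group[OF this, of 2]
  have "(\<lambda>n. sum ?W {n * 2..<n * 2 + 2}) sums (\<Sum>i. ?W i)" by simp
  moreover have "(\<lambda>n. sum ?W {n * 2..<n * 2 + 2}) = (\<lambda>n. U n + V n)"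
  proof
    fix n
    have "{n * 2..<n * 2 + 2} = {2*n, Suc (2*n)}" by auto
    then show "sum ?W {n * 2..<n * 2 + 2} = U n + V n" by simp
  qed
  ultimately have "(\<lambda>n. U n + V n) sums (\<Sum>i. ?W i)" by simp
  then have "(\<Sum>i. ?W i) = (\<Sum>n. U n + V n)" by (simp add: sums_unique)
  also have "\<dots> = (\<Sum>i. U i) + (\<Sum>i. V i)" by (rule suminf_add[symmetric]) (rule summableI)+
  finally show ?thesis .
qed

lemma hpre_union: "hausdorff_pre s \<delta> (A \<union> B) \<le> hausdorff_pre s \<delta> A + hausdorff_pre s \<delta> B"
proof -
  let ?C = "\<lambda>A. {U :: nat \<Rightarrow> _ set. A \<subseteq> (\<Union>i. U i) \<and> (\<forall>i. bounded (U i) \<and> diameter (U i) \<le> \<delta>)}"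
  let ?g = "\<lambda>U::nat \<Rightarrow> _ set. (\<Sum>i. ennreal (diameter (U i) powr s))"
  have "hausdorff_pre s \<delta> (A \<union> B) \<le> ?g U + ?g V" if U: "U \<in> ?C A" and V: "V \<in> ?C B" for U V
  proof -
    define W where "W = (\<lambda>i. if even i then U (i div 2) else V (i div 2))"
    have "W \<in> ?C (A \<union> B)"
    proof -
      have "A \<subseteq> (\<Union>i. W i)"
      proof
        fix x assume "x \<in> A" then obtain i where "x \<in> U i" using U by auto
        then have "x \<in> W (2*i)" by (simp add: W_def)
        then show "x \<in> (\<Union>i. W i)" by blast
      qed
      moreover have "B \<subseteq> (\<Union>i. W i)"
      proof
        fix x assume "x \<in> B" then obtain i where "x \<in> V i" using V by auto
        then have "x \<in> W (Suc (2*i))" by (simp add: W_def)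
        then show "x \<in> (\<Union>i. W i)" by blast
      qed
      moreover have "\<forall>i. bounded (W i) \<and> diameter (W i) \<le> \<delta>" using U V by (simp add: W_def)
      ultimately show ?thesis by auto
    qed
    then have "hausdorff_pre s \<delta> (A \<union> B) \<le> ?g W" unfolding hausdorff_pre_def by (rule INF_lower)
    also have "?g W = ?g U + ?g V"
    proof -
      have "(\<lambda>i. ennreal (diameter (W i) powr s)) = (\<lambda>i. if even i then ennreal (diameter (U (i div 2)) powr s) else ennreal (diameter (V (i div 2)) powr s))"
        by (simp add: W_def fun_eq_iff)
      then show ?thesis using sum_interleave[of "\<lambda>i. ennreal (diameter (U i) powr s)" "\<lambda>i. ennreal (diameter (V i) powr s)"]
        by simp
    qed
    finally show ?thesis .
  qed
  then show ?thesis unfolding hausdorff_pre_def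
    by (rule INF_add_le)
qed

lemma haus_union: "hausdorff_measure s (A \<union> B) \<le> hausdorff_measure s A + hausdorff_measure s B"
  unfolding hausdorff_measure_def
proof (rule SUP_least)
  fix \<delta> :: real assume "\<delta> \<in> {0<..}"
  have "hausdorff_pre s \<delta> (A \<union> B) \<le> hausdorff_pre s \<delta> A + hausdorff_pre s \<delta> B" by (rule hpre_union)
  also have "\<dots> \<le> (SUP \<delta>\<in>{0<..}. hausdorff_pre s \<delta> A) + (SUP \<delta>\<in>{0<..}. hausdorff_pre s \<delta> B)"
    using \<open>\<delta> \<in> {0<..}\<close> by (intro add_mono SUP_upper)
  finally show "hausdorff_pre s \<delta> (A \<union> B) \<le> (SUP \<delta>\<in>{0<..}. hausdorff_pre s \<delta> A) + (SUP \<delta>\<in>{0<..}. hausdorff_pre s \<delta> B)" .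
qed

lemma haus_point: assumes "s > 0" shows "hausdorff_measure s {p} = 0"
proof -
  have "hausdorff_pre s \<delta> {p} = 0" if "\<delta> > 0" for \<delta>
  proof -
    have "hausdorff_pre s \<delta> {p} \<le> (\<Sum>i. ennreal (diameter ((\<lambda>i. {p}) i) powr s))"
      unfolding hausdorff_pre_def by (rule INF_lower) (use that in auto)
    then show ?thesis by simp
  qed
  then show ?thesis unfolding hausdorff_measure_def by simp
qed

lemma haus_lip:
  fixes f :: "'a::real_normed_vector \<Rightarrow> 'b::real_normed_vector"
  assumes c: "c > 0" and s: "s > 0"
    and L: "\<And>x y. x \<in> A \<Longrightarrow> y \<in> A \<Longrightarrow> dist (f x) (f y) \<le> c * dist x y"
  shows "hausdorff_measure s (f ` A) \<le> ennreal (c powr s) * hausdorff_measure s A"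
  unfolding hausdorff_measure_def[of s "f ` A"]
proof (rule SUP_least)
  fix \<delta> :: real assume "\<delta> \<in> {0<..}"
  then have d: "\<delta> > 0" by simp
  let ?K = "ennreal (c powr s)"
  have "hausdorff_pre s \<delta> (f ` A) \<le> ?K * hausdorff_pre s (\<delta>/c) A"
    unfolding hausdorff_pre_def[of s "\<delta>/c"]
  proof (rule INF_mult_aux)
    show "?K \<noteq> 0" using c by simp
    show "?K \<noteq> top" by simp
    fix U :: "nat \<Rightarrow> 'a set"
    assume "U \<in> {U. A \<subseteq> (\<Union>i. U i) \<and> (\<forall>i. bounded (U i) \<and> diameter (U i) \<le> \<delta> / c)}"
    then have cov: "A \<subseteq> (\<Union>i. U i)" and bU: "\<And>i. bounded (U i)" and dU: "\<And>i. diameter (U i) \<le> \<delta> / c"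
      by auto
    define V where "V = (\<lambda>i. f ` (U i \<inter> A))"
    have dist_le: "dist y z \<le> c * diameter (U i)" if yz: "y \<in> V i" "z \<in> V i" for i y z
    proof -
      obtain x x' where "x \<in> U i" "x \<in> A" "y = f x" "x' \<in> U i" "x' \<in> A" "z = f x'"
        using yz unfolding V_def by blast
      then have "dist y z \<le> c * dist x x'" using L by simp
      also have "\<dots> \<le> c * diameter (U i)"
        using diameter_bounded_bound[OF bU \<open>x \<in> U i\<close> \<open>x' \<in> U i\<close>] c by simp
      finally show ?thesis .
    qed
    have bV: "bounded (V i)" for i
    proof (cases "V i = {}")
      case True then show ?thesis by simp
    next
      case False
      then obtain y where "y \<in> V i" by auto
      then show ?thesis unfolding bounded_def using dist_le by blast
    qed
    have dV: "diameter (V i) \<le> c * diameter (U i)" for i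
      by (rule diameter_le) (use dist_le diameter_ge_0[OF bU] c in \<open>auto simp: dist_norm\<close>)
    have "V \<in> {U. f ` A \<subseteq> (\<Union>i. U i) \<and> (\<forall>i. bounded (U i) \<and> diameter (U i) \<le> \<delta>)}"
    proof -
      have "f ` A \<subseteq> (\<Union>i. V i)" using cov unfolding V_def by blast
      moreover have "diameter (V i) \<le> \<delta>" for i
      proof -
        have "c * diameter (U i) \<le> \<delta>" using dU[of i] c by (simp add: field_simps)
        then show ?thesis using dV[of i] c by simp
      qed
      ultimately show ?thesis using bV by auto
    qed
    then have "hausdorff_pre s \<delta> (f ` A) \<le> (\<Sum>i. ennreal (diameter (V i) powr s))"
      unfolding hausdorff_pre_def by (rule INF_lower)
    also have "\<dots> \<le> (\<Sum>i. ?K * ennreal (diameter (U i) powr s))"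
    proof (rule suminf_le)
      fix i
      have "diameter (V i) powr s \<le> (c * diameter (U i)) powr s"
        using dV[of i] diameter_ge_0[OF bV] s by (intro powr_mono2) auto
      also have "\<dots> = c powr s * diameter (U i) powr s" by (rule powr_mult)
      finally show "ennreal (diameter (V i) powr s) \<le> ?K * ennreal (diameter (U i) powr s)"
        by (simp add: ennreal_mult[symmetric] ennreal_leI)
    qed auto
    also have "\<dots> = ?K * (\<Sum>i. ennreal (diameter (U i) powr s))" by simp
    finally show "hausdorff_pre s \<delta> (f ` A) \<le> ?K * (\<Sum>i. ennreal (diameter (U i) powr s))" .
  qed
  also have "\<dots> \<le> ?K * hausdorff_measure s A"
    using d c by (intro mult_left_mono hpre_le_H) auto
  finally show "hausdorff_pre s \<delta> (f ` A) \<le> ?K * hausdorff_measure s A" .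
qed

lemma haus_sim:
  fixes f :: "'a::real_normed_vector \<Rightarrow> 'a"
  assumes c: "c > 0" and s: "s > 0"
    and D: "\<And>x y. dist (f x) (f y) = c * dist x y"
  shows "hausdorff_measure s (f ` A) = ennreal (c powr s) * hausdorff_measure s A"
proof (rule antisym)
  show "hausdorff_measure s (f ` A) \<le> ennreal (c powr s) * hausdorff_measure s A"
    by (rule haus_lip[OF c s]) (simp add: D)
  have inj: "inj f"
  proof (rule injI)
    fix x y assume "f x = f y"
    then have "c * dist x y = 0" using D[of x y] by simp
    then show "x = y" using c by simp
  qed
  let ?g = "inv f"
  have gA: "?g ` (f ` A) = A" using inj by (simp add: image_comp)
  have "hausdorff_measure s (?g ` (f ` A)) \<le> ennreal ((1/c) powr s) * hausdorff_measure s (f ` A)"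
  proof (rule haus_lip)
    fix y y' assume "y \<in> f ` A" "y' \<in> f ` A"
    then obtain x x' where "y = f x" "y' = f x'" by auto
    then show "dist (?g y) (?g y') \<le> 1 / c * dist y y'" using inj D c by (simp add: field_simps)
  qed (use c s in auto)
  then have "ennreal (c powr s) * hausdorff_measure s A \<le> ennreal (c powr s) * (ennreal ((1/c) powr s) * hausdorff_measure s (f ` A))"
    using gA by (simp add: mult_left_mono)
  also have "\<dots> = ennreal (c powr s * (1/c) powr s) * hausdorff_measure s (f ` A)"
    by (simp add: ennreal_mult mult.assoc)
  also have "c powr s * (1/c) powr s = 1" using c by (simp add: powr_mult[symmetric])
  finally show "ennreal (c powr s) * hausdorff_measure s A \<le> hausdorff_measure s (f ` A)" by simp
qed




lemma wc_Nil[simp]: "word_comp F [] x = x" by (simp add: word_comp_def)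
lemma wc_Cons[simp]: "word_comp F (i # \<sigma>) x = F i (word_comp F \<sigma> x)" by (simp add: word_comp_def)
lemma wc_append[simp]: "word_comp F (\<sigma> @ \<tau>) x = word_comp F \<sigma> (word_comp F \<tau> x)"
  by (induction \<sigma>) auto

lemma contr_le0:
  fixes F :: "'b \<Rightarrow> real"
  assumes x0: "x0 \<in> X" "0 \<le> F x0" and B: "\<And>x. x \<in> X \<Longrightarrow> F x \<le> B" and c: "c < 1"
    and step: "\<And>x. x \<in> X \<Longrightarrow> (\<And>y. y \<in> X \<Longrightarrow> F y \<le> Sup (F ` X)) \<Longrightarrow> 0 \<le> Sup (F ` X) \<Longrightarrow> F x \<le> c * Sup (F ` X)"
    and x: "x \<in> X"
  shows "F x \<le> 0"
proof -
  have bdd: "bdd_above (F ` X)" by (rule bdd_aboveI2) (rule B)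
  have up: "\<And>y. y \<in> X \<Longrightarrow> F y \<le> Sup (F ` X)" using bdd by (auto intro: cSup_upper)
  have P0: "0 \<le> Sup (F ` X)" using up[OF x0(1)] x0(2) by linarith
  have "Sup (F ` X) \<le> c * Sup (F ` X)"
    using x0(1) step[OF _ up P0] by (intro cSup_least) auto
  then have "Sup (F ` X) \<le> 0" using c P0 by (smt (verit) mult_le_cancel_right1)
  then show ?thesis using up[OF x] by linarith
qed

locale hut =
  fixes N :: nat and S :: "nat \<Rightarrow> 'a::euclidean_space \<Rightarrow> 'a" and r :: "nat \<Rightarrow> real"
    and \<gamma> :: "'a set" and a b :: 'a and s :: real and \<phi> :: "real \<Rightarrow> 'a"
  assumes N2: "N \<ge> 2"
  and rpos: "\<And>i. i \<in> {1..N} \<Longrightarrow> 0 < r i"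
  and rlt1: "\<And>i. i \<in> {1..N} \<Longrightarrow> r i < 1"
  and sim: "\<And>i x y. i \<in> {1..N} \<Longrightarrow> dist (S i x) (S i y) = r i * dist x y"
  and comp: "compact \<gamma>" and ne: "\<gamma> \<noteq> {}" and inv: "\<gamma> = (\<Union>i\<in>{1..N}. S i ` \<gamma>)"
  and fix1: "S 1 a = a" and fixN: "S N b = b" and link: "\<And>i. i \<in> {1..N-1} \<Longrightarrow> S i b = S (i+1) a"
  and spos: "s > 0" and ssum: "(\<Sum>i=1..N. r i powr s) = 1"
  and lim: "uniform_limit {0..1} (hut_approx N S r s a b) \<phi> sequentially"
begin

abbreviation "T \<equiv> hut_t r s"
abbreviation "hs \<equiv> hut_s r s"
definition "q i = r i powr s"
definition "p0 x = a + x *\<^sub>R (b - a)"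

lemma qpos: assumes "i \<in> {1..N}" shows "0 < q i" using rpos[OF assms] by (simp add: q_def)
lemma qlt1: assumes "i \<in> {1..N}" shows "q i < 1"
  using powr_less_mono2[OF spos, of "r i" 1] rpos[OF assms] rlt1[OF assms] by (simp add: q_def)

lemma T0[simp]: "T 0 = 0" by (simp add: hut_t_def)
lemma TSuc: "T (Suc i) = T i + q (Suc i)" by (simp add: hut_t_def q_def)
lemma TN: "T N = 1" using ssum by (simp add: hut_t_def)
lemma Tstep: "i \<ge> 1 \<Longrightarrow> T i = T (i-1) + q i"
  using TSuc[of "i-1"] by simp
lemma T_strict: "i < j \<Longrightarrow> j \<le> N \<Longrightarrow> T i < T j"
proof (induction j)
  case 0 then show ?case by simp
next
  case (Suc j)
  have "q (Suc j) > 0" using Suc.prems by (intro qpos) auto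
  then show ?case using Suc by (cases "i < j") (auto simp: TSuc less_Suc_eq)
qed
lemma T_mono: "i \<le> j \<Longrightarrow> j \<le> N \<Longrightarrow> T i \<le> T j"
  using T_strict by (cases "i = j") (auto simp: less_eq_real_def le_less)
lemma T_ge0: "i \<le> N \<Longrightarrow> 0 \<le> T i" using T_mono[of 0 i] by simp
lemma T_le1: "i \<le> N \<Longrightarrow> T i \<le> 1" using T_mono[of i N] TN by simp

lemma hs_eq: "i \<in> {1..N} \<Longrightarrow> hs i t = T (i-1) + t * q i"
  using Tstep[of i] by (simp add: hut_s_def algebra_simps)

lemma hs_range: "i \<in> {1..N} \<Longrightarrow> t \<in> {0..1} \<Longrightarrow> T (i-1) \<le> hs i t \<and> hs i t \<le> T i"
  using hs_eq[of i t] Tstep[of i] qpos[of i]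
  by (auto simp: mult_le_cancel_right1 intro!: mult_nonneg_nonneg)

lemma hs_01: "i \<in> {1..N} \<Longrightarrow> t \<in> {0..1} \<Longrightarrow> hs i t \<in> {0..1}"
proof -
  assume a: "i \<in> {1..N}" "t \<in> {0..1}"
  then have "i - 1 \<le> N" "i \<le> N" by auto
  then show ?thesis using hs_range[OF a] T_ge0[of "i-1"] T_le1[of i] by auto
qed

lemma wc_hs_01: "set \<sigma> \<subseteq> {1..N} \<Longrightarrow> t \<in> {0..1} \<Longrightarrow> word_comp hs \<sigma> t \<in> {0..1}"
proof (induction \<sigma>)
  case (Cons i \<sigma>)
  then show ?case using hs_01[of i "word_comp hs \<sigma> t"] by simp
qed simp

lemma piece: assumes "t \<in> {0..1}" shows "\<exists>i\<in>{1..N}. T (i-1) \<le> t \<and> t \<le> T i"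
proof -
  have ex: "t \<le> T N" using assms TN by simp
  define i where "i = (LEAST i. t \<le> T i)"
  have ti: "t \<le> T i" unfolding i_def by (rule LeastI[of _ N]) (rule ex)
  have iN: "i \<le> N" unfolding i_def by (rule Least_le) (rule ex)
  show ?thesis
  proof (cases "i = 0")
    case True
    then have "t = 0" using ti assms by simp
    moreover have "0 \<le> T 1" using N2 by (intro T_ge0) simp
    ultimately show ?thesis using N2 by (intro bexI[of _ 1]) auto
  next
    case False
    have "\<not> t \<le> T (i-1)" unfolding i_def by (rule not_less_Least) (use False i_def in auto)
    then show ?thesis using False iN ti by (intro bexI[of _ i]) auto
  qed
qed

lemma piece_inv: assumes "i \<in> {1..N}" "T (i-1) \<le> t" "t \<le> T i"
  shows "\<exists>x\<in>{0..1}. t = hs i x"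
proof -
  define x where "x = (t - T (i-1)) / q i"
  have q: "q i > 0" using qpos assms by simp
  have "hs i x = t" using hs_eq[OF assms(1)] q by (simp add: x_def)
  moreover have "x \<in> {0..1}" using assms q Tstep[of i] by (auto simp: x_def field_simps)
  ultimately show ?thesis by auto
qed

lemma cover01: "t \<in> {0..1} \<Longrightarrow> \<exists>i\<in>{1..N}. \<exists>x\<in>{0..1}. t = hs i x"
  using piece piece_inv by blast

lemma p0_0[simp]: "p0 0 = a" and p0_1[simp]: "p0 1 = b" by (simp_all add: p0_def)

lemma one_lemma: "set \<sigma> \<subseteq> {1..N} \<Longrightarrow> x \<in> {0..1} \<Longrightarrow> word_comp hs \<sigma> x = 1 \<Longrightarrow> word_comp S \<sigma> (p0 x) = b"
proof (induction \<sigma>)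
  case Nil then show ?case by simp
next
  case (Cons i \<sigma>)
  let ?X = "word_comp hs \<sigma> x"
  have i: "i \<in> {1..N}" and X: "?X \<in> {0..1}" using Cons.prems wc_hs_01[of \<sigma> x] by auto
  have h: "hs i ?X = 1" using Cons.prems by simp
  have iN: "i = N"
  proof (rule ccontr)
    assume "i \<noteq> N" then have "T i < T N" using i by (intro T_strict) auto
    then show False using hs_range[OF i X] h TN by simp
  qed
  have "T (N-1) + ?X * q N = T (N-1) + q N" using h hs_eq[OF i] Tstep[of N] N2 TN iN by simp
  then have "?X = 1" using qpos[of N] N2 by simp
  then have "word_comp S \<sigma> (p0 x) = b" using Cons by simp
  then show ?case using iN fixN by simp
qed

lemma zero_lemma: "set \<sigma> \<subseteq> {1..N} \<Longrightarrow> x \<in> {0..1} \<Longrightarrow> word_comp hs \<sigma> x = 0 \<Longrightarrow> word_comp S \<sigma> (p0 x) = a"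
proof (induction \<sigma>)
  case Nil then show ?case by simp
next
  case (Cons i \<sigma>)
  let ?X = "word_comp hs \<sigma> x"
  have i: "i \<in> {1..N}" and X: "?X \<in> {0..1}" using Cons.prems wc_hs_01[of \<sigma> x] by auto
  have h: "hs i ?X = 0" using Cons.prems by simp
  have i1: "i = 1"
  proof (rule ccontr)
    assume "i \<noteq> 1" then have "T 0 < T (i-1)" using i by (intro T_strict) auto
    then show False using hs_range[OF i X] h by simp
  qed
  have "?X * q 1 = 0" using h hs_eq[OF i] i1 by simp
  then have "?X = 0" using qpos[of 1] N2 by simp
  then have "word_comp S \<sigma> (p0 x) = a" using Cons by simp
  then show ?case using i1 fix1 by simp
qed

lemma adj: assumes i: "i \<in> {1..N}" and j: "j \<in> {1..N}" and ij: "i < j"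
  and X: "X \<in> {0..1}" and Y: "Y \<in> {0..1}" and e: "hs i X = hs j Y"
  shows "j = i + 1 \<and> X = 1 \<and> Y = 0"
proof -
  have "T i \<le> T (j-1)" using ij j by (intro T_mono) auto
  have 1: "hs i X \<le> T i" "T (j-1) \<le> hs j Y" using hs_range[OF i X] hs_range[OF j Y] by auto
  have eqT: "T i = T (j-1)" and hX: "hs i X = T i" and hY: "hs j Y = T (j-1)"
    using 1 e \<open>T i \<le> T (j-1)\<close> by linarith+
  have "j = i + 1"
  proof (rule ccontr)
    assume "j \<noteq> i + 1" then have "T i < T (j-1)" using ij j by (intro T_strict) auto
    then show False using eqT by simp
  qed
  moreover have "X = 1"
  proof -
    have "T (i-1) + X * q i = T (i-1) + q i" using hX hs_eq[OF i] Tstep[of i] i by simp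
    then show ?thesis using qpos[OF i] by simp
  qed
  moreover have "Y = 0"
  proof -
    have "Y * q j = 0" using hY hs_eq[OF j] by simp
    then show ?thesis using qpos[OF j] by simp
  qed
  ultimately show ?thesis by simp
qed

lemma rep_unique:
  "set \<sigma> \<subseteq> {1..N} \<Longrightarrow> set \<tau> \<subseteq> {1..N} \<Longrightarrow> length \<sigma> = length \<tau> \<Longrightarrow> x \<in> {0..1} \<Longrightarrow> y \<in> {0..1}
   \<Longrightarrow> word_comp hs \<sigma> x = word_comp hs \<tau> y \<Longrightarrow> word_comp S \<sigma> (p0 x) = word_comp S \<tau> (p0 y)"
proof (induction \<sigma> arbitrary: \<tau>)
  case Nil then show ?case by simp
next
  case (Cons i \<sigma>)
  then obtain j \<tau>' where \<tau>: "\<tau> = j # \<tau>'" by (cases \<tau>) auto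
  let ?X = "word_comp hs \<sigma> x" and ?Y = "word_comp hs \<tau>' y"
  have i: "i \<in> {1..N}" and j: "j \<in> {1..N}" and X: "?X \<in> {0..1}" and Y: "?Y \<in> {0..1}"
    and s1: "set \<sigma> \<subseteq> {1..N}" and s2: "set \<tau>' \<subseteq> {1..N}" and len: "length \<sigma> = length \<tau>'"
    using Cons.prems wc_hs_01[of \<sigma> x] wc_hs_01[of \<tau>' y] \<tau> by auto
  have e: "hs i ?X = hs j ?Y" using Cons.prems \<tau> by simp
  consider "i = j" | "i < j" | "j < i" by linarith
  then show ?case
  proof cases
    case 1
    then have "?X = ?Y" using e hs_eq[OF i] qpos[OF i] by simp
    then have "word_comp S \<sigma> (p0 x) = word_comp S \<tau>' (p0 y)"
      using Cons.IH[OF s1 s2 len] Cons.prems by simp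
    then show ?thesis using 1 \<tau> by simp
  next
    case 2
    from adj[OF i j 2 X Y e] have "j = i + 1" "?X = 1" "?Y = 0" by auto
    then have "word_comp S \<sigma> (p0 x) = b" "word_comp S \<tau>' (p0 y) = a"
      using one_lemma[OF s1] zero_lemma[OF s2] Cons.prems by auto
    moreover have "S i b = S (i+1) a" using link[of i] i j \<open>j = i+1\<close> by auto
    ultimately show ?thesis using \<tau> \<open>j = i+1\<close> by simp
  next
    case 3
    from adj[OF j i 3 Y X e[symmetric]] have "i = j + 1" "?Y = 1" "?X = 0" by auto
    then have "word_comp S \<sigma> (p0 x) = a" "word_comp S \<tau>' (p0 y) = b"
      using one_lemma[OF s2] zero_lemma[OF s1] Cons.prems by auto
    moreover have "S j b = S (j+1) a" using link[of j] i j \<open>i = j+1\<close> by auto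
    ultimately show ?thesis using \<tau> \<open>i = j+1\<close> by simp
  qed
qed

lemma rep_exists: "t \<in> {0..1} \<Longrightarrow> \<exists>\<sigma> x. set \<sigma> \<subseteq> {1..N} \<and> length \<sigma> = k \<and> x \<in> {0..1} \<and> t = word_comp hs \<sigma> x"
proof (induction k arbitrary: t)
  case 0 then show ?case by (intro exI[of _ "[]"]) auto
next
  case (Suc k)
  from cover01[OF Suc.prems] obtain i x where i: "i \<in> {1..N}" "x \<in> {0..1}" "t = hs i x" by auto
  from Suc.IH[OF i(2)] obtain \<sigma> y where "set \<sigma> \<subseteq> {1..N} \<and> length \<sigma> = k \<and> y \<in> {0..1} \<and> x = word_comp hs \<sigma> y" by auto
  then show ?case using i by (intro exI[of _ "i # \<sigma>"] exI[of _ y]) auto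
qed

abbreviation "HA \<equiv> hut_approx N S r s a b"

lemma HA_eq: assumes "set \<sigma> \<subseteq> {1..N}" "length \<sigma> = k" "x \<in> {0..1}"
  shows "HA k (word_comp hs \<sigma> x) = word_comp S \<sigma> (p0 x)"
proof -
  let ?P = "\<lambda>y. \<exists>\<sigma>' x'. set \<sigma>' \<subseteq> {1..N} \<and> length \<sigma>' = k \<and> x' \<in> {0..1}
      \<and> word_comp hs \<sigma> x = word_comp hs \<sigma>' x' \<and> y = word_comp S \<sigma>' (a + x' *\<^sub>R (b - a))"
  have "?P (word_comp S \<sigma> (p0 x))" using assms by (auto simp: p0_def)
  then have "?P (SOME y. ?P y)" by (rule someI)
  then obtain \<sigma>' x' where h: "set \<sigma>' \<subseteq> {1..N}" "length \<sigma>' = k" "x' \<in> {0..1}"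
      "word_comp hs \<sigma> x = word_comp hs \<sigma>' x'" "(SOME y. ?P y) = word_comp S \<sigma>' (p0 x')"
    unfolding p0_def by blast
  have "word_comp S \<sigma> (p0 x) = word_comp S \<sigma>' (p0 x')"
    by (rule rep_unique) (use assms h in auto)
  then show ?thesis using h(5) unfolding hut_approx_def by simp
qed

lemma HA_step: assumes "i \<in> {1..N}" "x \<in> {0..1}"
  shows "HA (Suc k) (hs i x) = S i (HA k x)"
proof -
  obtain \<sigma> y where h: "set \<sigma> \<subseteq> {1..N}" "length \<sigma> = k" "y \<in> {0..1}" "x = word_comp hs \<sigma> y"
    using rep_exists[OF assms(2)] by blast
  have "HA (Suc k) (hs i x) = HA (Suc k) (word_comp hs (i # \<sigma>) y)" using h by simp
  also have "\<dots> = word_comp S (i # \<sigma>) (p0 y)" using h assms by (intro HA_eq) auto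
  also have "\<dots> = S i (HA k x)" using HA_eq[OF h(1-3)] h(4) by simp
  finally show ?thesis .
qed

lemma S_tendsto: assumes i: "i \<in> {1..N}" and f: "(f \<longlongrightarrow> l) F"
  shows "((\<lambda>n. S i (f n)) \<longlongrightarrow> S i l) F"
proof -
  have "((\<lambda>n. dist (f n) l) \<longlongrightarrow> 0) F" using f by (simp only: tendsto_dist_iff[symmetric])
  then have "((\<lambda>n. r i * dist (f n) l) \<longlongrightarrow> 0) F" by (rule tendsto_mult_right_zero)
  then have "((\<lambda>n. dist (S i (f n)) (S i l)) \<longlongrightarrow> 0) F" using sim[OF i] by simp
  then show ?thesis by (rule tendsto_dist_iff[THEN iffD2])
qed

lemma phi_pt: "t \<in> {0..1} \<Longrightarrow> (\<lambda>k. HA k t) \<longlonglongrightarrow> \<phi> t"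
  by (rule tendsto_uniform_limitI[OF lim])

lemma phi_step: assumes i: "i \<in> {1..N}" and x: "x \<in> {0..1}"
  shows "\<phi> (hs i x) = S i (\<phi> x)"
proof -
  have "(\<lambda>k. HA (Suc k) (hs i x)) \<longlonglongrightarrow> \<phi> (hs i x)"
    using phi_pt[OF hs_01[OF i x]] by (rule LIMSEQ_Suc)
  moreover have "(\<lambda>k. HA (Suc k) (hs i x)) \<longlonglongrightarrow> S i (\<phi> x)"
    using S_tendsto[OF i phi_pt[OF x]] HA_step[OF i x] by simp
  ultimately show ?thesis by (rule LIMSEQ_unique)
qed

lemma phi_word: "set \<sigma> \<subseteq> {1..N} \<Longrightarrow> x \<in> {0..1} \<Longrightarrow> \<phi> (word_comp hs \<sigma> x) = word_comp S \<sigma> (\<phi> x)"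
proof (induction \<sigma>)
  case (Cons i \<sigma>)
  then show ?case using phi_step[of i "word_comp hs \<sigma> x"] wc_hs_01[of \<sigma> x] by simp
qed simp

definition "R \<sigma> = prod_list (map r \<sigma>)"
definition "\<rho> = Max (r ` {1..N})"

lemma rho: "0 < \<rho>" "\<rho> < 1" "\<And>i. i \<in> {1..N} \<Longrightarrow> r i \<le> \<rho>"
proof -
  have ne: "r ` {1..N} \<noteq> {}" using N2 by auto
  show "\<rho> < 1" unfolding \<rho>_def using rlt1 ne by (subst Max_less_iff) auto
  show "\<And>i. i \<in> {1..N} \<Longrightarrow> r i \<le> \<rho>" unfolding \<rho>_def by (rule Max_ge) auto
  have "1 \<in> {1..N}" using N2 by simp
  then show "0 < \<rho>" using rpos[of 1] \<open>\<And>i. i \<in> {1..N} \<Longrightarrow> r i \<le> \<rho>\<close>[of 1] by linarith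
qed

lemma R_props: "set \<sigma> \<subseteq> {1..N} \<Longrightarrow> 0 < R \<sigma> \<and> R \<sigma> \<le> \<rho> ^ length \<sigma>"
proof (induction \<sigma>)
  case Nil then show ?case by (simp add: R_def)
next
  case (Cons i \<sigma>)
  then have i: "i \<in> {1..N}" and h: "0 < R \<sigma>" "R \<sigma> \<le> \<rho> ^ length \<sigma>" by auto
  have "r i * R \<sigma> \<le> \<rho> * \<rho> ^ length \<sigma>"
    using rho(3)[OF i] h rpos[OF i] rho(1) by (intro mult_mono) auto
  then show ?case using rpos[OF i] h by (simp add: R_def)
qed

lemma wc_sim: "set \<sigma> \<subseteq> {1..N} \<Longrightarrow> dist (word_comp S \<sigma> x) (word_comp S \<sigma> y) = R \<sigma> * dist x y"
proof (induction \<sigma>)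
  case Nil then show ?case by (simp add: R_def)
next
  case (Cons i \<sigma>)
  then show ?case using sim[of i] by (simp add: R_def)
qed

lemma wc_gamma: "set \<sigma> \<subseteq> {1..N} \<Longrightarrow> z \<in> \<gamma> \<Longrightarrow> word_comp S \<sigma> z \<in> \<gamma>"
proof (induction \<sigma>)
  case (Cons i \<sigma>)
  then have "S i (word_comp S \<sigma> z) \<in> (\<Union>i\<in>{1..N}. S i ` \<gamma>)" by auto
  moreover have "(\<Union>i\<in>{1..N}. S i ` \<gamma>) \<subseteq> \<gamma>" using inv by (rule equalityD2)
  ultimately show ?case by auto
qed simp

lemma pow_small: assumes "\<And>k. d \<le> \<rho> ^ k * D" "0 \<le> D" shows "d \<le> 0"
proof (rule ccontr)
  assume "\<not> d \<le> 0"
  then have "d / (D + 1) > 0" using assms(2) by simp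
  from real_arch_pow_inv[OF this rho(2)] obtain k where k: "\<rho> ^ k < d / (D + 1)" by auto
  have "\<rho> ^ k * D \<le> \<rho> ^ k * (D + 1)" using rho(1) by simp
  also have "\<dots> < d" using k assms(2) by (simp add: field_simps)
  finally show False using assms(1)[of k] by simp
qed

lemma phi_in_gamma: assumes t: "t \<in> {0..1}" shows "\<phi> t \<in> \<gamma>"
proof -
  obtain y0 where y0: "y0 \<in> \<gamma>" using ne by auto
  define D where "D = dist a y0 + norm (b - a)"
  have "\<forall>k. \<exists>z\<in>\<gamma>. dist (HA k t) z \<le> \<rho> ^ k * D"
  proof
    fix k
    obtain \<sigma> x where h: "set \<sigma> \<subseteq> {1..N}" "length \<sigma> = k" "x \<in> {0..1}" "t = word_comp hs \<sigma> x"
      using rep_exists[OF t] by blast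
    have "dist (p0 x) y0 \<le> D"
    proof -
      have "dist (p0 x) y0 \<le> dist (p0 x) a + dist a y0" by (rule dist_triangle)
      moreover have "dist (p0 x) a = \<bar>x\<bar> * norm (b - a)" by (simp add: p0_def dist_norm)
      moreover have "\<bar>x\<bar> * norm (b - a) \<le> norm (b - a)" using h(3) by (simp add: mult_left_le_one_le)
      ultimately show ?thesis by (simp add: D_def)
    qed
    then have "dist (HA k t) (word_comp S \<sigma> y0) \<le> \<rho> ^ k * D"
    proof -
      have "dist (HA k t) (word_comp S \<sigma> y0) = R \<sigma> * dist (p0 x) y0"
        using HA_eq[OF h(1-3)] h(4) wc_sim[OF h(1)] by simp
      also have "\<dots> \<le> \<rho> ^ k * D"
        using R_props[OF h(1)] h(2) \<open>dist (p0 x) y0 \<le> D\<close> rho(1) by (intro mult_mono) auto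
      finally show ?thesis .
    qed
    then show "\<exists>z\<in>\<gamma>. dist (HA k t) z \<le> \<rho> ^ k * D" using wc_gamma[OF h(1) y0] by blast
  qed
  then obtain z where z: "\<And>k. z k \<in> \<gamma>" "\<And>k. dist (HA k t) (z k) \<le> \<rho> ^ k * D" by metis
  have "z \<longlonglongrightarrow> \<phi> t"
  proof -
    have lim1: "(\<lambda>k. dist (HA k t) (\<phi> t)) \<longlonglongrightarrow> 0" using phi_pt[OF t] by (rule tendsto_dist_iff[THEN iffD1])
    have lim2: "(\<lambda>k. \<rho> ^ k * D) \<longlonglongrightarrow> 0"
      using rho by (intro tendsto_mult_left_zero LIMSEQ_power_zero) auto
    have "(\<lambda>k. dist (z k) (\<phi> t)) \<longlonglongrightarrow> 0"
    proof (rule Lim_null_comparison)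
      show "\<forall>\<^sub>F k in sequentially. norm (dist (z k) (\<phi> t)) \<le> \<rho> ^ k * D + dist (HA k t) (\<phi> t)"
      proof (intro always_eventually allI)
        fix k
        have "dist (z k) (\<phi> t) \<le> dist (HA k t) (z k) + dist (HA k t) (\<phi> t)" by (rule dist_triangle3)
        then show "norm (dist (z k) (\<phi> t)) \<le> \<rho> ^ k * D + dist (HA k t) (\<phi> t)" using z(2)[of k] by simp
      qed
      show "(\<lambda>k. \<rho> ^ k * D + dist (HA k t) (\<phi> t)) \<longlonglongrightarrow> 0"
        using tendsto_add[OF lim2 lim1] by simp
    qed
    then show ?thesis by (rule tendsto_dist_iff[THEN iffD2])
  qed
  then show ?thesis by (rule closed_sequentially[OF compact_imp_closed[OF comp] z(1)])
qed

definition "L \<sigma> = prod_list (map q \<sigma>)"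
definition "\<rho>s = \<rho> powr s"

lemma rhos: "0 < \<rho>s" "\<rho>s < 1" "\<And>i. i \<in> {1..N} \<Longrightarrow> q i \<le> \<rho>s"
proof -
  show "0 < \<rho>s" using rho(1) by (simp add: \<rho>s_def)
  show "\<rho>s < 1" using powr_less_mono2[OF spos, of \<rho> 1] rho by (simp add: \<rho>s_def)
  show "q i \<le> \<rho>s" if i: "i \<in> {1..N}" for i
    unfolding q_def \<rho>s_def using rho(3)[OF i] rpos[OF i] spos by (intro powr_mono2) auto
qed

lemma L_props: "set \<sigma> \<subseteq> {1..N} \<Longrightarrow> 0 < L \<sigma> \<and> L \<sigma> \<le> \<rho>s ^ length \<sigma>"
proof (induction \<sigma>)
  case Nil then show ?case by (simp add: L_def)
next
  case (Cons i \<sigma>)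
  then have i: "i \<in> {1..N}" and h: "0 < L \<sigma>" "L \<sigma> \<le> \<rho>s ^ length \<sigma>" by auto
  have "q i * L \<sigma> \<le> \<rho>s * \<rho>s ^ length \<sigma>"
    using rhos(3)[OF i] h qpos[OF i] rhos(1) by (intro mult_mono) auto
  then show ?case using qpos[OF i] h by (simp add: L_def)
qed

lemma wc_hs_aff: "set \<sigma> \<subseteq> {1..N} \<Longrightarrow> word_comp hs \<sigma> t = word_comp hs \<sigma> 0 + t * L \<sigma>"
proof (induction \<sigma>)
  case Nil then show ?case by (simp add: L_def)
next
  case (Cons i \<sigma>)
  then have i: "i \<in> {1..N}" by auto
  show ?case using Cons hs_eq[OF i] by (simp add: L_def algebra_simps)
qed

lemma wc_hs_img: assumes "set \<sigma> \<subseteq> {1..N}" "u \<le> v"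
  shows "word_comp hs \<sigma> ` {u..v} = {word_comp hs \<sigma> u .. word_comp hs \<sigma> v}"
proof -
  define A where "A = word_comp hs \<sigma> 0"
  have e: "word_comp hs \<sigma> = (\<lambda>t. L \<sigma> * t + A)"
  proof
    fix t show "word_comp hs \<sigma> t = L \<sigma> * t + A"
      using wc_hs_aff[OF assms(1), of t] unfolding A_def by (simp only: mult.commute add.commute)
  qed
  show ?thesis using L_props[OF assms(1)] assms(2)
    unfolding e by (simp add: image_affinity_atLeastAtMost)
qed

lemma wc_hs_cont: assumes "set \<sigma> \<subseteq> {1..N}" shows "continuous_on A (word_comp hs \<sigma>)"
proof -
  define A where "A = word_comp hs \<sigma> 0"
  have e: "word_comp hs \<sigma> = (\<lambda>t. L \<sigma> * t + A)"
  proof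
    fix t show "word_comp hs \<sigma> t = L \<sigma> * t + A"
      using wc_hs_aff[OF assms(1), of t] unfolding A_def by (simp only: mult.commute add.commute)
  qed
  show ?thesis unfolding e by (intro continuous_intros)
qed

lemma exists_word: "y \<in> \<gamma> \<Longrightarrow> \<exists>\<sigma>. set \<sigma> \<subseteq> {1..N} \<and> length \<sigma> = k \<and> y \<in> word_comp S \<sigma> ` \<gamma>"
proof (induction k arbitrary: y)
  case 0 then show ?case by (intro exI[of _ "[]"]) auto
next
  case (Suc k)
  have "y \<in> (\<Union>i\<in>{1..N}. S i ` \<gamma>)" using Suc.prems inv by blast
  then obtain i z where iz: "i \<in> {1..N}" "z \<in> \<gamma>" "y = S i z" by auto
  from Suc.IH[OF iz(2)] obtain \<sigma> w where "set \<sigma> \<subseteq> {1..N}" "length \<sigma> = k" "w \<in> \<gamma>" "z = word_comp S \<sigma> w"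
    by auto
  then show ?case using iz by (intro exI[of _ "i # \<sigma>"]) auto
qed

lemma gamma_in_phi: assumes y: "y \<in> \<gamma>" shows "y \<in> \<phi> ` {0..1}"
proof -
  define Ws where "Ws k = {\<sigma>. set \<sigma> \<subseteq> {1..N} \<and> length \<sigma> = k \<and> y \<in> word_comp S \<sigma> ` \<gamma>}" for k
  define C where "C k = (\<Union>\<sigma>\<in>Ws k. word_comp hs \<sigma> ` {0..1})" for k
  have fin: "finite (Ws k)" for k
    by (rule finite_subset[OF _ finite_lists_length_eq[OF finite_atLeastAtMost, of 1 N k]]) (auto simp: Ws_def)
  have compC: "compact (C k)" for k unfolding C_def
    by (intro compact_UN fin compact_continuous_image wc_hs_cont) (auto simp: Ws_def)
  have neC: "C k \<noteq> {}" for k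
  proof -
    obtain \<sigma> where "\<sigma> \<in> Ws k" using exists_word[OF y, of k] unfolding Ws_def by blast
    then show ?thesis unfolding C_def by auto
  qed
  have monoC: "C (Suc k) \<subseteq> C k" for k
  proof
    fix t assume "t \<in> C (Suc k)"
    then obtain \<sigma>' x where h: "\<sigma>' \<in> Ws (Suc k)" "x \<in> {0..1}" "t = word_comp hs \<sigma>' x"
      unfolding C_def by auto
    then have "\<sigma>' \<noteq> []" by (auto simp: Ws_def)
    then obtain \<sigma> i where \<sigma>': "\<sigma>' = \<sigma> @ [i]" by (metis append_butlast_last_id)
    from h obtain z where z: "z \<in> \<gamma>" "y = word_comp S \<sigma>' z" by (auto simp: Ws_def)
    have i: "i \<in> {1..N}" and s: "set \<sigma> \<subseteq> {1..N}" and len: "length \<sigma> = k"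
      using h(1) \<sigma>' by (auto simp: Ws_def)
    have "S i z \<in> \<gamma>" using wc_gamma[of "[i]" z] i z by simp
    then have "\<sigma> \<in> Ws k" using s len z \<sigma>' by (auto simp: Ws_def)
    moreover have "hs i x \<in> {0..1}" by (rule hs_01[OF i h(2)])
    moreover have "t = word_comp hs \<sigma> (hs i x)" using h(3) \<sigma>' by simp
    ultimately show "t \<in> C k" unfolding C_def by blast
  qed
  have "\<Inter>(range C) \<noteq> {}"
  proof (rule compact_nest)
    show "\<And>m n. m \<le> n \<Longrightarrow> C n \<subseteq> C m"
      using monoC by (rule lift_Suc_antimono_le)
  qed (use compC neC in auto)
  then obtain t where t: "\<And>k. t \<in> C k" by blast
  from t[of 0] have t01: "t \<in> {0..1}" by (auto simp: C_def Ws_def split: if_splits)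
  have bd: "bounded \<gamma>" using comp by (rule compact_imp_bounded)
  have "dist (\<phi> t) y \<le> \<rho> ^ k * diameter \<gamma>" for k
  proof -
    from t[of k] obtain \<sigma> x z where h: "set \<sigma> \<subseteq> {1..N}" "length \<sigma> = k" "x \<in> {0..1}"
        "t = word_comp hs \<sigma> x" "z \<in> \<gamma>" "y = word_comp S \<sigma> z"
      unfolding C_def Ws_def by blast
    have "dist (\<phi> t) y = R \<sigma> * dist (\<phi> x) z" using phi_word[OF h(1,3)] h(4,6) wc_sim[OF h(1)] by simp
    also have "\<dots> \<le> \<rho> ^ k * diameter \<gamma>"
      using R_props[OF h(1)] h(2) diameter_bounded_bound[OF bd phi_in_gamma[OF h(3)] h(5)] rho(1)
      by (intro mult_mono) auto
    finally show ?thesis .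
  qed
  then have "dist (\<phi> t) y \<le> 0"
    using diameter_ge_0[OF bd] by (intro pow_small) auto
  then have "\<phi> t = y" by simp
  then show ?thesis using t01 by blast
qed

lemma phi_img: "\<phi> ` {0..1} = \<gamma>"
  using phi_in_gamma gamma_in_phi by blast

definition "\<mu> u v = hausdorff_measure s (\<phi> ` {u..v})"
abbreviation "h \<equiv> hausdorff_measure s \<gamma>"

lemma hs0: "i \<in> {1..N} \<Longrightarrow> hs i 0 = T (i-1)" using hs_eq by simp
lemma hs1: "i \<in> {1..N} \<Longrightarrow> hs i 1 = T i" using hs_eq Tstep by simp

lemma img_scale: assumes i: "i \<in> {1..N}" and uv: "0 \<le> u" "u \<le> v" "v \<le> 1"
  shows "\<phi> ` {hs i u..hs i v} = S i ` \<phi> ` {u..v}"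
proof -
  have e: "hs i ` {u..v} = {hs i u..hs i v}" using wc_hs_img[of "[i]" u v] i uv by simp
  have "\<phi> ` {hs i u..hs i v} = \<phi> ` (hs i ` {u..v})" by (simp only: e)
  also have "\<dots> = (\<lambda>x. \<phi> (hs i x)) ` {u..v}" by (rule image_image)
  finally have "\<phi> ` {hs i u..hs i v} = (\<lambda>x. \<phi> (hs i x)) ` {u..v}" .
  also have "\<dots> = (\<lambda>x. S i (\<phi> x)) ` {u..v}" using phi_step[OF i] uv by (intro image_cong) auto
  finally show ?thesis by (simp add: image_comp o_def)
qed

lemma mu_scale: assumes i: "i \<in> {1..N}" and uv: "0 \<le> u" "u \<le> v" "v \<le> 1"
  shows "\<mu> (hs i u) (hs i v) = ennreal (q i) * \<mu> u v"
  unfolding \<mu>_def img_scale[OF assms] q_def using rpos[OF i] spos sim[OF i] by (intro haus_sim) auto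

lemma mu_sub: assumes "u \<le> w" "w \<le> v" shows "\<mu> u v \<le> \<mu> u w + \<mu> w v"
proof -
  have "{u..v} = {u..w} \<union> {w..v}" using assms by auto
  then show ?thesis unfolding \<mu>_def by (simp add: image_Un haus_union)
qed

lemma mu_pt: "\<mu> u u = 0" unfolding \<mu>_def using haus_point[OF spos] by simp

lemma mu_le_h: "0 \<le> u \<Longrightarrow> v \<le> 1 \<Longrightarrow> \<mu> u v \<le> h"
  unfolding \<mu>_def phi_img[symmetric] by (intro haus_mono image_mono) auto

lemma mu_01: "\<mu> 0 1 = h" unfolding \<mu>_def phi_img by simp

lemma mu_piece: "i \<in> {1..N} \<Longrightarrow> \<mu> (T (i-1)) (T i) = ennreal (q i) * h"
  using mu_scale[of i 0 1] hs0 hs1 mu_01 by simp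

lemma haus_word: "set \<sigma> \<subseteq> {1..N} \<Longrightarrow> hausdorff_measure s (word_comp S \<sigma> ` \<gamma>) = ennreal (R \<sigma> powr s) * h"
  using R_props[of \<sigma>] wc_sim[of \<sigma>] spos by (intro haus_sim) auto

lemma infinite_case: assumes ht: "h = top" and uv: "0 \<le> u" "u < v" "v \<le> 1"
  shows "\<mu> u v = top"
proof -
  define t where "t = (u + v) / 2"
  have t: "t \<in> {0..1}" using uv by (auto simp: t_def)
  obtain k where k: "\<rho>s ^ k < (v - u) / 2" using real_arch_pow_inv[OF _ rhos(2), of "(v-u)/2"] uv by auto
  obtain \<sigma> x where h: "set \<sigma> \<subseteq> {1..N}" "length \<sigma> = k" "x \<in> {0..1}" "t = word_comp hs \<sigma> x"
    using rep_exists[OF t] by blast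
  define A where "A = word_comp hs \<sigma> 0"
  have img: "word_comp hs \<sigma> ` {0..1} = {A .. A + L \<sigma>}"
    using wc_hs_img[OF h(1), of 0 1] wc_hs_aff[OF h(1), of 1] by (simp add: A_def)
  have tA: "t = A + x * L \<sigma>" using wc_hs_aff[OF h(1), of x] h(4) by (simp add: A_def)
  have L: "0 < L \<sigma>" "L \<sigma> < (v - u) / 2" using L_props[OF h(1)] h(2) k by auto
  have xL: "x * L \<sigma> \<le> L \<sigma>" "0 \<le> x * L \<sigma>" using h(3) L by (auto simp: mult_left_le_one_le)
  have "u \<le> A" using tA L xL t_def by argo
  have "A + L \<sigma> \<le> v" using tA L xL t_def by argo
  then have sub: "{A .. A + L \<sigma>} \<subseteq> {u..v}" using \<open>u \<le> A\<close> by auto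
  have "\<phi> ` word_comp hs \<sigma> ` {0..1} = word_comp S \<sigma> ` \<phi> ` {0..1}"
    using phi_word[OF h(1)] by (auto simp: image_comp o_def intro!: image_cong)
  then have "\<phi> ` {A .. A + L \<sigma>} = word_comp S \<sigma> ` \<gamma>" using img phi_img by simp
  then have "hausdorff_measure s (word_comp S \<sigma> ` \<gamma>) \<le> \<mu> u v"
    unfolding \<mu>_def using sub by (metis haus_mono image_mono)
  moreover have "hausdorff_measure s (word_comp S \<sigma> ` \<gamma>) = top"
    using haus_word[OF h(1)] ht R_props[OF h(1)] by (simp add: ennreal_mult_top)
  ultimately show ?thesis by (simp add: top_unique)
qed

lemma hs_mono_inv: "i \<in> {1..N} \<Longrightarrow> hs i x \<le> hs i y \<Longrightarrow> x \<le> y"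
  using hs_eq[of i] qpos[of i] by (simp add: mult_le_cancel_right)

lemma finite_case: assumes hfin: "h \<noteq> top" and uv: "0 \<le> u" "u \<le> v" "v \<le> 1"
  shows "\<mu> u v = h * ennreal (v - u)"
proof -
  define h0 where "h0 = enn2real h"
  have hh0: "h = ennreal h0" using hfin by (simp add: h0_def less_top)
  have h0: "0 \<le> h0" by (simp add: h0_def)
  define m where "m u v = enn2real (\<mu> u v)" for u v
  have fin: "\<mu> u v = ennreal (m u v)" "0 \<le> m u v" if "0 \<le> u" "v \<le> 1" for u v
  proof -
    have "\<mu> u v < top" using mu_le_h[OF that] hfin by (simp add: le_less_trans less_top)
    then show "\<mu> u v = ennreal (m u v)" "0 \<le> m u v" by (simp_all add: m_def less_top)
  qed
  have m_le: "m u v \<le> h0" if "0 \<le> u" "v \<le> 1" for u v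
    using mu_le_h[OF that] fin[OF that] hh0 h0 by simp
  have m_sub: "m u v \<le> m u w + m w v" if "0 \<le> u" "u \<le> w" "w \<le> v" "v \<le> 1" for u v w
  proof -
    have "ennreal (m u v) \<le> ennreal (m u w) + ennreal (m w v)"
      using mu_sub[of u w v] that fin[of u v] fin[of u w] fin[of w v] by simp
    also have "\<dots> = ennreal (m u w + m w v)" using fin[of u w] fin[of w v] that by (simp add: ennreal_plus)
    finally have "ennreal (m u v) \<le> ennreal (m u w + m w v)" .
    then show ?thesis using fin[of u w] fin[of w v] that by (subst (asm) ennreal_le_iff) auto
  qed
  have m_scale: "m (hs i u) (hs i v) = q i * m u v" if i: "i \<in> {1..N}" and "0 \<le> u" "u \<le> v" "v \<le> 1" for i u v
  proof -
    have a: "hs i u \<in> {0..1}" "hs i v \<in> {0..1}" using hs_01[OF i] that by auto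
    have "ennreal (m (hs i u) (hs i v)) = ennreal (q i * m u v)"
      using mu_scale[OF that] fin[of "hs i u" "hs i v"] fin[of u v] a that qpos[OF i]
      by (simp add: ennreal_mult)
    then show ?thesis using fin[of "hs i u" "hs i v"] fin[of u v] a that qpos[OF i] by simp
  qed
  have m_pt: "m u u = 0" for u by (simp add: m_def mu_pt)
  have m01: "m 0 1 = h0" by (simp add: m_def mu_01 h0_def)
  have Tin: "0 \<le> T i" "T i \<le> 1" if "i \<le> N" for i using T_ge0[OF that] T_le1[OF that] by auto
  have m_piece: "m (T (i-1)) (T i) = q i * h0" if i: "i \<in> {1..N}" for i
    using m_scale[OF i, of 0 1] hs0[OF i] hs1[OF i] m01 by simp
  have m_full: "m (T i) (T j) \<le> h0 * (T j - T i)" if "i \<le> j" "j \<le> N" for i j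
    using that
  proof (induction j)
    case 0 then show ?case using m_pt by simp
  next
    case (Suc j)
    show ?case
    proof (cases "i = Suc j")
      case True then show ?thesis using m_pt by simp
    next
      case False
      then have ij: "i \<le> j" "j \<le> N" using Suc.prems by auto
      have "m (T i) (T (Suc j)) \<le> m (T i) (T j) + m (T j) (T (Suc j))"
        using Tin[of i] Tin[of "Suc j"] T_mono[of i j] T_mono[of j "Suc j"] ij Suc.prems by (intro m_sub) auto
      also have "\<dots> \<le> h0 * (T j - T i) + q (Suc j) * h0"
        using Suc.IH[OF ij] m_piece[of "Suc j"] Suc.prems by simp
      also have "\<dots> = h0 * (T (Suc j) - T i)" by (simp add: TSuc algebra_simps)
      finally show ?thesis .
    qed
  qed
  have prefix: "m 0 v \<le> h0 * v" if "v \<in> {0..1}" for v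
  proof -
    let ?F = "\<lambda>v. m 0 v - h0 * v"
    have "?F v \<le> 0"
    proof (rule contr_le0[of 0 "{0..1}" ?F h0 \<rho>s])
      show "?F 0 \<ge> 0" using m_pt by simp
      show "?F x \<le> h0" if "x \<in> {0..1}" for x
      proof -
        have "m 0 x \<le> h0" "m x 1 \<le> h0" using m_le that by auto
        moreover have "0 \<le> h0 * x" "0 \<le> h0 * (1 - x)" using h0 that by auto
        ultimately show ?thesis by linarith
      qed
      fix x :: real assume x: "x \<in> {0..1}" and up: "\<And>y. y \<in> {0..1} \<Longrightarrow> ?F y \<le> Sup (?F ` {0..1})"
        and P0: "0 \<le> Sup (?F ` {0..1})"
      let ?P = "Sup (?F ` {0..1})"
      obtain j where j: "j \<in> {1..N}" "T (j-1) \<le> x" "x \<le> T j" using piece[OF x] by auto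
      obtain x' where x': "x' \<in> {0..1}" "x = hs j x'" using piece_inv[OF j] by auto
      have jN: "j - 1 \<le> N" "j \<le> N" using j by auto
      have "m 0 x \<le> m 0 (T (j-1)) + m (T (j-1)) x" using j x Tin[OF jN(1)] by (intro m_sub) auto
      also have "m 0 (T (j-1)) \<le> h0 * T (j-1)" using m_full[of 0 "j-1"] jN by simp
      also have "m (T (j-1)) x = q j * m 0 x'" using m_scale[OF j(1), of 0 x'] x' hs0[OF j(1)] by simp
      also have "m 0 x' \<le> ?P + h0 * x'" using up[OF x'(1)] by simp
      finally have "m 0 x \<le> h0 * T (j-1) + q j * (?P + h0 * x')" using qpos[OF j(1)] by (simp add: mult_left_mono)
      moreover have "x = T (j-1) + x' * q j" using x'(2) hs_eq[OF j(1)] by simp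
      moreover have "q j * ?P \<le> \<rho>s * ?P" using rhos(3)[OF j(1)] P0 by (simp add: mult_right_mono)
      ultimately show "?F x \<le> \<rho>s * ?P" by (simp add: algebra_simps)
    qed (use rhos that in auto)
    then show ?thesis by simp
  qed
  have suffix: "m u 1 \<le> h0 * (1 - u)" if "u \<in> {0..1}" for u
  proof -
    let ?F = "\<lambda>u. m u 1 - h0 * (1 - u)"
    have "?F u \<le> 0"
    proof (rule contr_le0[of 1 "{0..1}" ?F h0 \<rho>s])
      show "?F 1 \<ge> 0" using m_pt by simp
      show "?F x \<le> h0" if "x \<in> {0..1}" for x
      proof -
        have "m 0 x \<le> h0" "m x 1 \<le> h0" using m_le that by auto
        moreover have "0 \<le> h0 * x" "0 \<le> h0 * (1 - x)" using h0 that by auto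
        ultimately show ?thesis by linarith
      qed
      fix x :: real assume x: "x \<in> {0..1}" and up: "\<And>y. y \<in> {0..1} \<Longrightarrow> ?F y \<le> Sup (?F ` {0..1})"
        and P0: "0 \<le> Sup (?F ` {0..1})"
      let ?P = "Sup (?F ` {0..1})"
      obtain i where i: "i \<in> {1..N}" "T (i-1) \<le> x" "x \<le> T i" using piece[OF x] by auto
      obtain x' where x': "x' \<in> {0..1}" "x = hs i x'" using piece_inv[OF i] by auto
      have iN: "i \<le> N" using i by auto
      have "m x 1 \<le> m x (T i) + m (T i) 1" using i x Tin[OF iN] by (intro m_sub) auto
      also have "m (T i) 1 \<le> h0 * (1 - T i)" using m_full[of i N] iN TN by simp
      also have "m x (T i) = q i * m x' 1" using m_scale[OF i(1), of x' 1] x' hs1[OF i(1)] by simp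
      also have "m x' 1 \<le> ?P + h0 * (1 - x')" using up[OF x'(1)] by simp
      finally have "m x 1 \<le> q i * (?P + h0 * (1 - x')) + h0 * (1 - T i)" using qpos[OF i(1)] by (simp add: mult_left_mono)
      moreover have "x = T (i-1) + x' * q i" using x'(2) hs_eq[OF i(1)] by simp
      moreover have "T i = T (i-1) + q i" using Tstep[of i] i by simp
      moreover have "q i * ?P \<le> \<rho>s * ?P" using rhos(3)[OF i(1)] P0 by (simp add: mult_right_mono)
      ultimately show "?F x \<le> \<rho>s * ?P" by (simp add: algebra_simps)
    qed (use rhos that in auto)
    then show ?thesis by simp
  qed
  have suffix_i: "m x (T i) \<le> h0 * (T i - x)" if i: "i \<in> {1..N}" "T (i-1) \<le> x" "x \<le> T i" for i x
  proof -
    obtain x' where x': "x' \<in> {0..1}" "x = hs i x'" using piece_inv[OF i] by auto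
    have "m x (T i) = q i * m x' 1" using m_scale[OF i(1), of x' 1] x' hs1[OF i(1)] by simp
    also have "\<dots> \<le> q i * (h0 * (1 - x'))" using suffix[OF x'(1)] qpos[OF i(1)] by (simp add: mult_left_mono)
    also have "\<dots> = h0 * (T i - x)" using x'(2) hs_eq[OF i(1)] Tstep[of i] i by (simp add: algebra_simps)
    finally show ?thesis .
  qed
  have prefix_j: "m (T (j-1)) x \<le> h0 * (x - T (j-1))" if j: "j \<in> {1..N}" "T (j-1) \<le> x" "x \<le> T j" for j x
  proof -
    obtain x' where x': "x' \<in> {0..1}" "x = hs j x'" using piece_inv[OF j] by auto
    have "m (T (j-1)) x = q j * m 0 x'" using m_scale[OF j(1), of 0 x'] x' hs0[OF j(1)] by simp
    also have "\<dots> \<le> q j * (h0 * x')" using prefix[OF x'(1)] qpos[OF j(1)] by (simp add: mult_left_mono)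
    also have "\<dots> = h0 * (x - T (j-1))" using x'(2) hs_eq[OF j(1)] by (simp add: algebra_simps)
    finally show ?thesis .
  qed
  have upper: "m u v \<le> h0 * (v - u)" if uv: "0 \<le> u" "u \<le> v" "v \<le> 1" for u v
  proof -
    let ?X = "{p :: real \<times> real. 0 \<le> fst p \<and> fst p \<le> snd p \<and> snd p \<le> 1}"
    let ?F = "\<lambda>p. m (fst p) (snd p) - h0 * (snd p - fst p)"
    have "?F (u, v) \<le> 0"
    proof (rule contr_le0[of "(0,0)" ?X ?F h0 \<rho>s])
      show "?F (0,0) \<ge> 0" using m_pt by simp
      show "?F x \<le> h0" if "x \<in> ?X" for x
      proof -
        have "m (fst x) (snd x) \<le> h0" using m_le that by auto
        moreover have "0 \<le> h0 * (snd x - fst x)" using h0 that by auto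
        ultimately show ?thesis by linarith
      qed
      fix p assume p: "p \<in> ?X" and up: "\<And>y. y \<in> ?X \<Longrightarrow> ?F y \<le> Sup (?F ` ?X)"
        and P0: "0 \<le> Sup (?F ` ?X)"
      let ?P = "Sup (?F ` ?X)"
      obtain x y where p': "p = (x, y)" by (cases p)
      have xy: "0 \<le> x" "x \<le> y" "y \<le> 1" using p p' by auto
      obtain i where i: "i \<in> {1..N}" "T (i-1) \<le> x" "x \<le> T i" using piece[of x] xy by auto
      show "?F p \<le> \<rho>s * ?P"
      proof (cases "y \<le> T i")
        case True
        obtain x' where x': "x' \<in> {0..1}" "x = hs i x'" using piece_inv[OF i] by auto
        obtain y' where y': "y' \<in> {0..1}" "y = hs i y'" using piece_inv[OF i(1), of y] i True xy by auto
        have "x' \<le> y'" using hs_mono_inv[OF i(1)] x' y' xy by simp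
        have e1: "m x y = q i * m x' y'" using m_scale[OF i(1), of x' y'] x' y' \<open>x' \<le> y'\<close> by simp
        have "?F (x', y') \<le> ?P" using up[of "(x', y')"] x' y' \<open>x' \<le> y'\<close> by auto
        have e2: "y - x = q i * (y' - x')" using x'(2) y'(2) hs_eq[OF i(1)] by (simp add: algebra_simps)
        have "?F p = q i * ?F (x', y')" by (simp only: p' e1 e2 fst_conv snd_conv) (simp add: algebra_simps)
        also have "\<dots> \<le> q i * ?P" using \<open>?F (x', y') \<le> ?P\<close> qpos[OF i(1)] by (intro mult_left_mono) auto
        also have "\<dots> \<le> \<rho>s * ?P" using rhos(3)[OF i(1)] P0 by (simp add: mult_right_mono)
        finally show ?thesis .
      next
        case False
        obtain j where j: "j \<in> {1..N}" "T (j-1) \<le> y" "y \<le> T j" using piece[of y] xy by auto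
        have "i \<le> j - 1"
        proof (rule ccontr)
          assume "\<not> i \<le> j - 1" then have "j \<le> i" using j by auto
          then have "T j \<le> T i" using i by (intro T_mono) auto
          then show False using False j by simp
        qed
        have Ti1: "T i \<le> T (j-1)" using \<open>i \<le> j - 1\<close> j by (intro T_mono) auto
        have "m x y \<le> m x (T i) + m (T i) y" using xy False i by (intro m_sub) auto
        also have "m (T i) y \<le> m (T i) (T (j-1)) + m (T (j-1)) y"
          using Ti1 j Tin[of i] i xy by (intro m_sub) auto
        finally have "m x y \<le> m x (T i) + (m (T i) (T (j-1)) + m (T (j-1)) y)" by simp
        moreover have "m x (T i) \<le> h0 * (T i - x)" by (rule suffix_i[OF i])
        moreover have "m (T i) (T (j-1)) \<le> h0 * (T (j-1) - T i)" using m_full \<open>i \<le> j - 1\<close> j by auto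
        moreover have "m (T (j-1)) y \<le> h0 * (y - T (j-1))" by (rule prefix_j[OF j])
        ultimately have "?F p \<le> 0" using p' by (simp add: algebra_simps)
        also have "0 \<le> \<rho>s * ?P" using rhos(1) P0 by simp
        finally show ?thesis .
      qed
    qed (use rhos uv in auto)
    then show ?thesis by simp
  qed
  have lower: "h0 * (v - u) \<le> m u v"
  proof -
    have "h0 \<le> m 0 u + m u 1" using m_sub[of 0 u 1] uv m01 by simp
    also have "m u 1 \<le> m u v + m v 1" using m_sub[of u v 1] uv by simp
    finally have "h0 \<le> m 0 u + m u v + m v 1" by simp
    moreover have "m 0 u \<le> h0 * u" "m v 1 \<le> h0 * (1 - v)" using prefix[of u] suffix[of v] uv by auto
    ultimately show ?thesis by (simp add: algebra_simps)
  qed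
  have "m u v = h0 * (v - u)" using upper[OF uv] lower by simp
  then show ?thesis using fin[of u v] uv hh0 h0 by (simp add: ennreal_mult)
qed

end

theorem corollary5p4:
  fixes N :: nat and S :: "nat \<Rightarrow> 'a::euclidean_space \<Rightarrow> 'a" and r :: "nat \<Rightarrow> real"
    and \<gamma> :: "'a set" and a b :: 'a and s :: real and \<phi> :: "real \<Rightarrow> 'a"
  assumes "IFS_quasiarc N S r \<gamma> a b"
    and "similarity_dimension N r s"
    and "hutchinson_param N S r s a b \<phi>"
  shows "\<forall>u\<in>{0..1}. \<forall>v\<in>{0..1}. u \<le> v \<longrightarrow>
           hausdorff_measure s (\<phi> ` {u..v}) = hausdorff_measure s \<gamma> * ennreal \<bar>u - v\<bar>"
proof -
  have interp: "hut N S r \<gamma> a b s \<phi>"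
    using assms unfolding IFS_quasiarc_def IFS_arc_def IFS_path_def IFS_def similarity_dimension_def
      hutchinson_param_def similarity_def hut_def by auto
  interpret hut N S r \<gamma> a b s \<phi> by (rule interp)
  show ?thesis
  proof (intro ballI impI)
    fix u v :: real assume u: "u \<in> {0..1}" and v: "v \<in> {0..1}" and uv: "u \<le> v"
    have abs: "\<bar>u - v\<bar> = v - u" using uv by simp
    show "hausdorff_measure s (\<phi> ` {u..v}) = h * ennreal \<bar>u - v\<bar>"
    proof (cases "u = v")
      case True
      then show ?thesis using mu_pt[of u] by (simp add: \<mu>_def)
    next
      case False
      then have "u < v" using uv by simp
      show ?thesis
      proof (cases "h = top")
        case True
        then show ?thesis using infinite_case[OF True, of u v] u v \<open>u < v\<close> abs
          by (simp add: \<mu>_def ennreal_mult_top)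
      next
        case False
        then show ?thesis using finite_case[OF False, of u v] u v uv abs by (simp add: \<mu>_def)
      qed
    qed
  qed
qed

end
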